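(* Let $\mathfrak{G}_{\Sigma_{1,0}}$ be the Goldman Lie algebra of the closed torus, taken over $\mathbb{Q}$. Then $\mathfrak{G}_{\Sigma_{1,0}}$ is finitely generated as a Lie algebra over $\mathbb{Q}$.
   Context: Let $\Sigma_{1,0}=T^2$ be the closed oriented torus, and let $\hat\pi$ be the set of free homotopy classes of loops on it. Since $\pi_1(T^2)\cong\mathbb{Z}^2$ is abelian, $\hat\pi$ is identified with $\mathbb{Z}^2$; writing $a,b$ for the two standard generators, every element of $\hat\pi$ is written $a^ib^j$ with $(i,j)\in\mathbb{Z}^2$, and $1=a^0b^0$ denotes the class of the contractible loop. The Goldman bracket of two classes $\alpha,\beta$ (represented by loops meeting in transverse double points) is $[\alpha,\beta]=\sum_{p\in\alpha\cap\beta}\epsilon(p)\,\alpha*_p\beta$, where $\epsilon(p)=\pm1$ is the sign of the intersection at $p$ with respect to the orientation and $\alpha*_p\beta$ is the loop obtained by traversing $\alpha$ from $p$ and then $\beta$ from $p$; it is extended bilinearly. On the torus this gives $[a^ib^j,a^kb^l]=(il-jk)\,a^{i+k}b^{j+l}$. The Goldman Lie algebra $\mathfrak{G}_{\Sigma_{1,0}}$ over $\mathbb{Q}$ is the $\mathbb{Q}$-vector space with basis $\hat\pi$ equipped with this bracket. *)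

theory Defs
  imports Complex_Main "HOL-Library.Poly_Mapping"
begin

text \<open>The Goldman Lie algebra of the closed torus over the rationals: the rational
vector space with basis the free homotopy classes, identified with int \<times> int via
a^i b^j \<mapsto> (i,j); elements are finitely supported functions finitely supported functions from int pairs to rat.\<close>

type_synonym goldman_torus = "(int \<times> int) \<Rightarrow>\<^sub>0 rat"

definition gbasis :: "int \<Rightarrow> int \<Rightarrow> goldman_torus" where
  "gbasis i j = Poly_Mapping.single (i, j) 1"

definition gsmult :: "rat \<Rightarrow> goldman_torus \<Rightarrow> goldman_torus" where
  "gsmult c x = Poly_Mapping.map (\<lambda>r. c * r) x"

definition goldman_bracket :: "goldman_torus \<Rightarrow> goldman_torus \<Rightarrow> goldman_torus" where
  "goldman_bracket x y =
     (\<Sum>p\<in>Poly_Mapping.keys x. \<Sum>q\<in>Poly_Mapping.keys y.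
        Poly_Mapping.single (fst p + fst q, snd p + snd q)
          (of_int (fst p * snd q - snd p * fst q) * Poly_Mapping.lookup x p * Poly_Mapping.lookup y q))"

inductive_set lie_generated :: "goldman_torus set \<Rightarrow> goldman_torus set" for S where
  gen: "x \<in> S \<Longrightarrow> x \<in> lie_generated S"
| zero: "0 \<in> lie_generated S"
| add: "x \<in> lie_generated S \<Longrightarrow> y \<in> lie_generated S \<Longrightarrow> x + y \<in> lie_generated S"
| smult: "x \<in> lie_generated S \<Longrightarrow> gsmult c x \<in> lie_generated S"
| bracket: "x \<in> lie_generated S \<Longrightarrow> y \<in> lie_generated S \<Longrightarrow> goldman_bracket x y \<in> lie_generated S"

end

theory Submission
  imports Defs
begin

lemma br_basis:
  "goldman_bracket (gbasis i j) (gbasis k l) = gsmult (of_int (i*l - j*k)) (gbasis (i+k) (j+l))"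
  unfolding goldman_bracket_def gbasis_def gsmult_def
  by (simp add: lookup_single)

lemma sm_basis: "gsmult c (gbasis i j) = Poly_Mapping.single (i,j) c"
  unfolding gsmult_def gbasis_def by simp


lemma step:
  assumes "gbasis i j \<in> lie_generated S" "gbasis k l \<in> lie_generated S" "i*l - j*k \<noteq> 0"
  shows "gbasis (i+k) (j+l) \<in> lie_generated S"
proof -
  have "gsmult (1 / of_int (i*l - j*k)) (goldman_bracket (gbasis i j) (gbasis k l)) \<in> lie_generated S"
    using assms by (intro lie_generated.smult lie_generated.bracket)
  also have "gsmult (1 / of_int (i*l - j*k)) (goldman_bracket (gbasis i j) (gbasis k l)) = gbasis (i+k) (j+l)"
    proof -
    have "rat_of_int i * rat_of_int l \<noteq> rat_of_int j * rat_of_int k"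
      using assms(3) by (metis eq_iff_diff_eq_0 of_int_eq_iff of_int_mult)
    then show ?thesis unfolding br_basis sm_basis by (simp add: gsmult_def gbasis_def)
  qed
  finally show ?thesis .
qed

definition S0 :: "goldman_torus set" where
  "S0 = {gbasis 0 0, gbasis 1 0, gbasis (-1) 0, gbasis 0 1, gbasis 0 (-1)}"

lemma g_a: "gbasis 1 0 \<in> lie_generated S0" "gbasis (-1) 0 \<in> lie_generated S0"
  "gbasis 0 1 \<in> lie_generated S0" "gbasis 0 (-1) \<in> lie_generated S0"
  "gbasis 0 0 \<in> lie_generated S0"
  by (auto intro: lie_generated.gen simp: S0_def)

lemma g_1nat: "gbasis 1 (int n) \<in> lie_generated S0 \<and> gbasis 1 (- int n) \<in> lie_generated S0"
proof (induction n)
  case 0 then show ?case using g_a by simp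
next
  case (Suc n)
  have a: "gbasis (0+1) (1 + int n) \<in> lie_generated S0"
    by (rule step) (use g_a Suc in auto)
  have b: "gbasis (0+1) (-1 + - int n) \<in> lie_generated S0"
    by (rule step) (use g_a Suc in auto)
  show ?case using a b by (simp add: add.commute)
qed

lemma g_1: "gbasis 1 j \<in> lie_generated S0"
proof (cases "j \<ge> 0")
  case True then show ?thesis using g_1nat[of "nat j"] by simp
next
  case False then show ?thesis using g_1nat[of "nat (-j)"] by simp
qed

lemma g_0: "j \<noteq> 0 \<Longrightarrow> gbasis 0 j \<in> lie_generated S0"
  using step[OF g_a(2) g_1[of j]] by simp

lemma g_jnat: "j \<noteq> 0 \<Longrightarrow> gbasis (int n) j \<in> lie_generated S0 \<and> gbasis (- int n) j \<in> lie_generated S0"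
proof (induction n)
  case 0 then show ?case using g_0 by simp
next
  case (Suc n)
  have a: "gbasis (1 + int n) (0 + j) \<in> lie_generated S0"
    by (rule step) (use g_a Suc in auto)
  have b: "gbasis (-1 + - int n) (0 + j) \<in> lie_generated S0"
    by (rule step) (use g_a Suc in auto)
  show ?case using a b by (simp add: add.commute)
qed

lemma g_j: "j \<noteq> 0 \<Longrightarrow> gbasis i j \<in> lie_generated S0"
proof (cases "i \<ge> 0")
  case True then show "j \<noteq> 0 \<Longrightarrow> ?thesis" using g_jnat[of j "nat i"] by simp
next
  case False then show "j \<noteq> 0 \<Longrightarrow> ?thesis" using g_jnat[of j "nat (-i)"] by simp
qed

lemma g_all: "gbasis i j \<in> lie_generated S0"
proof (cases "j = 0")
  case False then show ?thesis by (rule g_j)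
next
  case True
  show ?thesis
  proof (cases "i = 0")
    case True then show ?thesis using \<open>j = 0\<close> g_a by simp
  next
    case False
    have "gbasis (0 + i) (-1 + 1) \<in> lie_generated S0"
      by (rule step) (use g_a g_j False in auto)
    then show ?thesis using \<open>j = 0\<close> by simp
  qed
qed

lemma g_single: "Poly_Mapping.single p c \<in> lie_generated S0"
proof -
  obtain i j where p: "p = (i,j)" by (cases p)
  have "gsmult c (gbasis i j) \<in> lie_generated S0" by (intro lie_generated.smult g_all)
  then show ?thesis by (simp add: sm_basis p)
qed

lemma g_sum: "finite A \<Longrightarrow> (\<Sum>p\<in>A. Poly_Mapping.single p (f p)) \<in> lie_generated S0"
  by (induction A rule: finite_induct) (auto intro: lie_generated.zero lie_generated.add g_single)

lemma expand: "(x::goldman_torus) = (\<Sum>p\<in>Poly_Mapping.keys x. Poly_Mapping.single p (Poly_Mapping.lookup x p))"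
proof -
  have *: "finite I \<Longrightarrow> Poly_Mapping.lookup (\<Sum>p\<in>I. Poly_Mapping.single p (Poly_Mapping.lookup x p)) q =
            (if q \<in> I then Poly_Mapping.lookup x q else 0)" for I q
    by (induction I rule: finite_induct) (auto simp: lookup_single lookup_add when_def)
  show ?thesis by (rule poly_mapping_eqI) (fastforce simp add: in_keys_iff *)
qed

theorem mainTheorem1:
  shows "\<exists>S :: goldman_torus set. finite S \<and> lie_generated S = UNIV"
proof (intro exI conjI)
  show "finite S0" by (simp add: S0_def)
  show "lie_generated S0 = UNIV"
  proof (rule set_eqI, simp)
    fix x :: goldman_torus
    show "x \<in> lie_generated S0" by (subst expand) (rule g_sum, simp)
  qed
qed

end
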